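(* Let $A$ be an abelian variety over $\mathbb{F}_q$, with angle rank $\delta=\delta_A$ and angle torsion order $m=m_A$. Then $\mathrm{SF}(A)\cong\mathrm{U}(1)^{\delta}\times C_m$ as topological groups. Furthermore, the identity component of $\mathrm{SF}(A)$ equals $\mathrm{SF}(A_{(m)})$ (as subgroups of $\mathrm{U}(1)^g$), and $\mathrm{SF}(A)/\mathrm{SF}(A)^\circ\cong C_m$.
   Context: Let $q=p^d$ with $p$ prime. For an abelian variety $A$ of dimension $g$ over $\mathbb{F}_q$, let $P_A(T)$ be the characteristic polynomial of Frobenius (on an $\ell$-adic Tate module); its roots, listed with multiplicity, are $\alpha_1,\dots,\alpha_g,\bar\alpha_1,\dots,\bar\alpha_g$ with $|\alpha_j|=\sqrt q$ and $\arg(\alpha_i)\ge\arg(\alpha_j)$ for $i>j$; put $u_j=\alpha_j/\sqrt q\in\mathrm{U}(1)$. The Serre–Frobenius group $\mathrm{SF}(A)$ is the closure in $\mathrm{U}(1)^g$ of the subgroup generated by $(u_1,\dots,u_g)$. The angle group $U_A$ is the subgroup of $\mathbb{C}^\times$ generated by $u_1,\dots,u_g$; writing $U_A\cong\mathbb{Z}^{\delta_A}\oplus\mathbb{Z}/m_A\mathbb{Z}$, $\delta_A$ is the angle rank and $m_A$ the angle torsion order. $A_{(r)}$ denotes the base change of $A$ to $\mathbb{F}_{q^r}$ (its normalized eigenvalues are $u_1^r,\dots,u_g^r$). $C_m$ is the cyclic group of order $m$. *)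

theory Defs
  imports "HOL-Analysis.Analysis" "HOL-Computational_Algebra.Polynomial" "HOL-Algebra.Coset"
begin

text \<open>U(1)^g is modelled inside the product space nat => complex (product topology):
  points are functions with |x j| = 1 for j < g and x j = 1 for j >= g.\<close>

definition torus :: "nat \<Rightarrow> (nat \<Rightarrow> complex) set" where
  "torus g = {x. (\<forall>j<g. norm (x j) = 1) \<and> (\<forall>j\<ge>g. x j = 1)}"

definition tmul :: "(nat \<Rightarrow> complex) \<Rightarrow> (nat \<Rightarrow> complex) \<Rightarrow> (nat \<Rightarrow> complex)" where
  "tmul x y = (\<lambda>j. x j * y j)"

definition tone :: "nat \<Rightarrow> complex" where
  "tone = (\<lambda>j. 1)"

text \<open>Serre--Frobenius group of the normalized eigenvalue vector (u_1,...,u_g):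
  the closure of the cyclic subgroup it generates (its integer powers).\<close>
definition SF :: "nat \<Rightarrow> (nat \<Rightarrow> complex) \<Rightarrow> (nat \<Rightarrow> complex) set" where
  "SF g u = closure (range (\<lambda>k::int. (\<lambda>j. if j < g then u j powi k else 1)))"

definition angle_group :: "nat \<Rightarrow> (nat \<Rightarrow> complex) \<Rightarrow> complex set" where
  "angle_group g u = {z. \<exists>n::nat \<Rightarrow> int. z = (\<Prod>j<g. u j powi n j)}"

text \<open>The cyclic group C_m, realized as the m-th roots of unity.\<close>
definition roots_unity :: "nat \<Rightarrow> complex set" where
  "roots_unity m = {z. z ^ m = 1}"

definition SF_group :: "nat \<Rightarrow> (nat \<Rightarrow> complex) \<Rightarrow> (nat \<Rightarrow> complex) monoid" where
  "SF_group g u = \<lparr>carrier = SF g u, mult = tmul, one = tone\<rparr>"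

definition cyclic_group :: "nat \<Rightarrow> complex monoid" where
  "cyclic_group m = \<lparr>carrier = roots_unity m, mult = (*), one = 1\<rparr>"

end

theory Submission
  imports Defs
begin

lemma hom_int:
  fixes f :: "int \<Rightarrow> complex"
  assumes add: "\<And>a b. f (a+b) = f a * f b" and nz: "f 1 \<noteq> 0"
  shows "f k = f 1 powi k"
proof -
  have f0: "f 0 = 1" using add[of 1 0] nz by simp
  show ?thesis
  proof (induction k rule: int_induct[where k=0])
    case base then show ?case by (simp add: f0)
  next
    case (step1 i) then show ?case using add[of i 1] nz
      by (simp add: power_int_add)
  next
    case (step2 i)
    have "f i = f (i - 1) * f 1" using add[of "i-1" 1] by simp
    then show ?case using step2 nz
      by (simp add: power_int_diff field_simps)
  qed
qed

locale SFL =
  fixes g \<delta> m :: nat and u :: "nat \<Rightarrow> complex" and \<psi> :: "(nat \<Rightarrow> int) \<times> int \<Rightarrow> complex"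
  assumes unorm: "\<forall>j<g. norm (u j) = 1" and m1: "m \<ge> 1"
    and psi_bij: "bij_betw \<psi> ({v. \<forall>j\<ge>\<delta>. v j = 0} \<times> {0..<int m}) (angle_group g u)"
    and psi_hom: "\<forall>a\<in>{v. \<forall>j\<ge>\<delta>. v j = 0} \<times> {0..<int m}. \<forall>b\<in>{v. \<forall>j\<ge>\<delta>. v j = 0} \<times> {0..<int m}.
        \<psi> (\<lambda>j. fst a j + fst b j, (snd a + snd b) mod int m) = \<psi> a * \<psi> b"
begin

definition "V = {v::nat\<Rightarrow>int. \<forall>j\<ge>\<delta>. v j = 0}"
definition "chi v r = \<psi> (v, r mod int m)"
definition "unitv i = (\<lambda>j. if j = i then 1 else 0::int)"
definition "e i = chi (unitv i) 0"
definition "zeta = chi (\<lambda>_. 0) 1"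

lemma angle_norm: "z \<in> angle_group g u \<Longrightarrow> norm z = 1"
proof -
  assume "z \<in> angle_group g u"
  then obtain n where z: "z = (\<Prod>j<g. u j powi n j)" by (auto simp: angle_group_def)
  have "norm z = (\<Prod>j<g. norm (u j powi n j))" by (simp add: z prod_norm)
  also have "\<dots> = 1" using unorm by (intro prod.neutral) (simp add: norm_power_int)
  finally show ?thesis .
qed

lemma chi_norm: "v \<in> V \<Longrightarrow> norm (chi v r) = 1"
proof -
  assume "v \<in> V"
  then have "(v, r mod int m) \<in> {v. \<forall>j\<ge>\<delta>. v j = 0} \<times> {0..<int m}" using m1 by (auto simp: V_def)
  then have "\<psi> (v, r mod int m) \<in> angle_group g u" using psi_bij unfolding bij_betw_def by blast
  then show ?thesis using angle_norm by (simp add: chi_def)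
qed

lemma chi_nz: "v \<in> V \<Longrightarrow> chi v r \<noteq> 0"
  by (metis chi_norm norm_zero zero_neq_one)

lemma chi_add: "v \<in> V \<Longrightarrow> w \<in> V \<Longrightarrow> chi (\<lambda>j. v j + w j) (r+s) = chi v r * chi w s"
proof -
  assume "v \<in> V" "w \<in> V"
  then have "(v, r mod int m) \<in> {v. \<forall>j\<ge>\<delta>. v j = 0} \<times> {0..<int m}"
     "(w, s mod int m) \<in> {v. \<forall>j\<ge>\<delta>. v j = 0} \<times> {0..<int m}" using m1 by (auto simp: V_def)
  from psi_hom[rule_format, OF this] show ?thesis
    by (simp add: chi_def mod_add_eq)
qed

lemma V_zero[simp]: "(\<lambda>_. 0) \<in> V" by (simp add: V_def)

lemma chi_zero: "chi (\<lambda>_. 0) 0 = 1"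
proof -
  have "chi (\<lambda>_. 0) 0 = chi (\<lambda>_. 0) 0 * chi (\<lambda>_. 0) 0"
    using chi_add[of "\<lambda>_. 0" "\<lambda>_. 0" 0 0] by simp
  then show ?thesis using chi_nz[of "\<lambda>_. 0" 0] by simp
qed

lemma chi_one_iff: "v \<in> V \<Longrightarrow> chi v r = 1 \<longleftrightarrow> (v = (\<lambda>_. 0) \<and> r mod int m = 0)"
proof
  assume v: "v \<in> V" and c: "chi v r = 1"
  have d: "(v, r mod int m) \<in> {v. \<forall>j\<ge>\<delta>. v j = 0} \<times> {0..<int m}"
     "((\<lambda>_. 0), 0) \<in> {v. \<forall>j\<ge>\<delta>. v j = 0} \<times> {0..<int m}" using m1 v by (auto simp: V_def)
  have "\<psi> (v, r mod int m) = \<psi> ((\<lambda>_. 0), 0)" using c chi_zero by (simp add: chi_def)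
  moreover have "inj_on \<psi> ({v. \<forall>j\<ge>\<delta>. v j = 0} \<times> {0..<int m})"
    using psi_bij by (simp add: bij_betw_def)
  ultimately have "(v, r mod int m) = ((\<lambda>_. 0), 0)" using d by (blast dest: inj_onD)
  then show "v = (\<lambda>_. 0) \<and> r mod int m = 0" by auto
next
  assume "v = (\<lambda>_. 0) \<and> r mod int m = 0"
  then show "chi v r = 1" using chi_zero by (simp add: chi_def)
qed

lemma unitv_V: "i < \<delta> \<Longrightarrow> unitv i \<in> V" by (auto simp: V_def unitv_def)

lemma chi_zeta: "chi (\<lambda>_. 0) r = zeta powi r"
  unfolding zeta_def
  by (rule hom_int[where f="\<lambda>r. chi (\<lambda>_. 0) r"]) (use chi_add[of "\<lambda>_. 0" "\<lambda>_. 0"] chi_nz in auto)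

lemma chi_unit: "i < \<delta> \<Longrightarrow> chi (\<lambda>j. k * unitv i j) 0 = e i powi k"
proof -
  assume i: "i < \<delta>"
  have V: "(\<lambda>j. k * unitv i j) \<in> V" for k using i by (auto simp: V_def unitv_def)
  have "chi (\<lambda>j. k * unitv i j) 0 = chi (\<lambda>j. 1 * unitv i j) 0 powi k"
  proof (rule hom_int[where f="\<lambda>k. chi (\<lambda>j. k * unitv i j) 0"])
    fix a b :: int
    show "chi (\<lambda>j. (a + b) * unitv i j) 0 = chi (\<lambda>j. a * unitv i j) 0 * chi (\<lambda>j. b * unitv i j) 0"
      using chi_add[OF V V, of a b 0 0] by (simp add: distrib_right)
  next
    show "chi (\<lambda>j. 1 * unitv i j) 0 \<noteq> 0" using chi_nz[OF V] by blast
  qed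
  then show ?thesis by (simp add: e_def)
qed

lemma chi_split: "v \<in> V \<Longrightarrow> chi v r = chi v 0 * chi (\<lambda>_. 0) r"
  using chi_add[of v "\<lambda>_. 0" 0 r] by simp

lemma chi_vec: "v \<in> V \<Longrightarrow> chi v 0 = (\<Prod>i<\<delta>. e i powi v i)"
proof -
  assume v: "v \<in> V"
  have "n \<le> \<delta> \<Longrightarrow> chi (\<lambda>j. if j < n then v j else 0) 0 = (\<Prod>i<n. e i powi v i)" for n
  proof (induction n)
    case 0 then show ?case using chi_zero by simp
  next
    case (Suc n)
    have V1: "(\<lambda>j. if j < n then v j else 0) \<in> V" using Suc by (auto simp: V_def)
    have V2: "(\<lambda>j. v n * unitv n j) \<in> V" using Suc by (auto simp: V_def unitv_def)
    have eq: "(\<lambda>j. if j < Suc n then v j else 0) = (\<lambda>j. (if j < n then v j else 0) + v n * unitv n j)"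
      by (rule ext) (auto simp: unitv_def less_Suc_eq)
    show ?case using chi_add[OF V1 V2, of 0 0] chi_unit[of n "v n"] Suc eq by simp
  qed
  note this[OF order_refl]
  moreover have "(\<lambda>j. if j < \<delta> then v j else 0) = v"
  proof (rule ext)
    fix j
    have "\<forall>j\<ge>\<delta>. v j = 0" using v unfolding V_def by blast
    then show "(if j < \<delta> then v j else 0) = v j" by (cases "j < \<delta>") auto
  qed
  ultimately show ?thesis by simp
qed

lemma chi_formula: "v \<in> V \<Longrightarrow> chi v r = (\<Prod>i<\<delta>. e i powi v i) * zeta powi r"
  using chi_split chi_vec chi_zeta by simp

definition "Dom = {v::nat\<Rightarrow>int. \<forall>j\<ge>\<delta>. v j = 0} \<times> {0..<int m}"
definition "pre j = inv_into Dom \<psi> (u j)"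
definition "a j = fst (pre j)"
definition "b j = snd (pre j)"
definition "c i = (SOME n. e i = (\<Prod>j<g. u j powi n j))"
definition "dd = (SOME n. zeta = (\<Prod>j<g. u j powi n j))"
definition "Epow k = (\<lambda>i. if i < \<delta> then e i powi k else 1)"
definition "Phi p = (\<lambda>j. if j < g then (\<Prod>l<\<delta>. fst p l powi a j l) * snd p powi b j else 1)"
definition "Psi x = ((\<lambda>i. if i < \<delta> then (\<Prod>j<g. x j powi c i j) else 1), (\<Prod>j<g. x j powi dd j))"
definition "U k = (\<lambda>j. if j < g then u j powi k else 1)"

lemma u_angle: "j < g \<Longrightarrow> u j \<in> angle_group g u"
proof -
  assume j: "j < g"
  have "(\<Prod>i<g. u i powi (if i = j then 1 else 0)) = (\<Prod>i<g. if i = j then u i else 1)"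
    by (rule prod.cong) auto
  also have "\<dots> = u j" using j by (simp add: prod.delta)
  finally have "u j = (\<Prod>i<g. u i powi (\<lambda>i. if i = j then (1::int) else 0) i)" by simp
  then show ?thesis unfolding angle_group_def
    by (intro CollectI exI[of _ "\<lambda>i. if i = j then (1::int) else 0"])
qed

lemma pre: "j < g \<Longrightarrow> pre j \<in> Dom \<and> \<psi> (pre j) = u j"
proof -
  assume j: "j < g"
  have "u j \<in> \<psi> ` Dom" using u_angle[OF j] psi_bij unfolding bij_betw_def Dom_def by simp
  from inv_into_into[OF this] f_inv_into_f[OF this] show ?thesis unfolding pre_def by simp
qed

lemma ab: "j < g \<Longrightarrow> a j \<in> V \<and> 0 \<le> b j \<and> b j < int m \<and> \<psi> (a j, b j) = u j"
  using pre[of j] unfolding a_def b_def Dom_def V_def by auto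

lemma chi_angle: "v \<in> V \<Longrightarrow> chi v r \<in> angle_group g u"
proof -
  assume "v \<in> V"
  then have "(v, r mod int m) \<in> {v. \<forall>j\<ge>\<delta>. v j = 0} \<times> {0..<int m}" using m1 by (auto simp: V_def)
  then show ?thesis using psi_bij unfolding bij_betw_def chi_def by blast
qed

lemma e_c: "i < \<delta> \<Longrightarrow> e i = (\<Prod>j<g. u j powi c i j)"
proof -
  assume "i < \<delta>"
  then have "e i \<in> angle_group g u" unfolding e_def using chi_angle unitv_V by blast
  then have "\<exists>n. e i = (\<Prod>j<g. u j powi n j)" by (simp add: angle_group_def)
  then show ?thesis unfolding c_def by (rule someI_ex)
qed

lemma zeta_dd: "zeta = (\<Prod>j<g. u j powi dd j)"
proof -
  have "zeta \<in> angle_group g u" unfolding zeta_def using chi_angle V_zero by blast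
  then have "\<exists>n. zeta = (\<Prod>j<g. u j powi n j)" by (simp add: angle_group_def)
  then show ?thesis unfolding dd_def by (rule someI_ex)
qed

lemma e_nz: "i < \<delta> \<Longrightarrow> e i \<noteq> 0" using chi_nz unitv_V e_def by auto
lemma e_norm: "i < \<delta> \<Longrightarrow> norm (e i) = 1" using chi_norm unitv_V e_def by auto
lemma zeta_nz: "zeta \<noteq> 0" using chi_nz zeta_def by auto
lemma zeta_norm: "norm zeta = 1" using chi_norm zeta_def by auto

lemma u_formula: "j < g \<Longrightarrow> u j = (\<Prod>l<\<delta>. e l powi a j l) * zeta powi b j"
proof -
  assume j: "j < g"
  have "chi (a j) (b j) = u j" using ab[OF j] by (simp add: chi_def)
  then show ?thesis using chi_formula ab[OF j] by simp
qed

lemma prod_powi: "finite A \<Longrightarrow> (\<Prod>x\<in>A. f x) powi k = (\<Prod>x\<in>A. (f x :: complex) powi k)"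
  by (induction A rule: finite_induct) (auto simp: power_int_mult_distrib)

lemma U_Phi: "U k = Phi (Epow k, zeta powi k)"
proof (rule ext)
  fix j
  show "U k j = Phi (Epow k, zeta powi k) j"
  proof (cases "j < g")
    case True
    have "Phi (Epow k, zeta powi k) j = (\<Prod>l<\<delta>. (e l powi k) powi a j l) * (zeta powi k) powi b j"
      using True by (simp add: Phi_def Epow_def)
    also have "\<dots> = (\<Prod>l<\<delta>. (e l powi a j l) powi k) * (zeta powi b j) powi k"
      by (simp add: power_int_mult[symmetric] mult.commute)
    also have "\<dots> = ((\<Prod>l<\<delta>. e l powi a j l) * zeta powi b j) powi k"
      by (simp add: prod_powi power_int_mult_distrib)
    also have "\<dots> = u j powi k" using u_formula[OF True] by simp
    finally show ?thesis using True by (simp add: U_def)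
  qed (simp add: U_def Phi_def)
qed

lemma Psi_U: "Psi (U k) = (Epow k, zeta powi k)"
proof -
  have 1: "(\<Prod>j<g. U k j powi c i j) = e i powi k" if "i < \<delta>" for i
  proof -
    have "(\<Prod>j<g. U k j powi c i j) = (\<Prod>j<g. (u j powi c i j) powi k)"
      by (rule prod.cong) (auto simp: U_def power_int_mult[symmetric] mult.commute)
    also have "\<dots> = e i powi k" using e_c[OF that] by (simp add: prod_powi)
    finally show ?thesis .
  qed
  have 2: "(\<Prod>j<g. U k j powi dd j) = zeta powi k"
  proof -
    have "(\<Prod>j<g. U k j powi dd j) = (\<Prod>j<g. (u j powi dd j) powi k)"
      by (rule prod.cong) (auto simp: U_def power_int_mult[symmetric] mult.commute)
    also have "\<dots> = zeta powi k" using zeta_dd by (simp add: prod_powi)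
    finally show ?thesis .
  qed
  show ?thesis using 1 2 by (auto simp: Psi_def Epow_def)
qed

definition "pmul p q = (tmul (fst p) (fst q), snd p * snd q)"

lemma Phi_hom: "Phi (pmul p q) = tmul (Phi p) (Phi q)"
  by (rule ext) (auto simp: Phi_def pmul_def tmul_def power_int_mult_distrib prod.distrib)

lemma Psi_hom: "Psi (tmul x y) = pmul (Psi x) (Psi y)"
  by (auto simp: Psi_def pmul_def tmul_def power_int_mult_distrib prod.distrib)

end


lemma tendsto_fun_comp:
  fixes f :: "'a \<Rightarrow> nat \<Rightarrow> complex"
  assumes "\<And>i. ((\<lambda>x. f x i) \<longlongrightarrow> l i) F"
  shows "(f \<longlongrightarrow> l) F"
proof -
  have "limitin (product_topology (\<lambda>_. euclidean) UNIV) f l F"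
    using assms by (simp add: limitin_componentwise)
  then show ?thesis by (simp add: euclidean_product_topology)
qed

lemma torus_0: "torus 0 = {tone}"
  by (auto simp: torus_def tone_def)

lemma torus_Suc: "torus (Suc n) = (\<lambda>p. (fst p)(n := snd p)) ` (torus n \<times> sphere 0 1)"
proof
  show "torus (Suc n) \<subseteq> (\<lambda>p. (fst p)(n := snd p)) ` (torus n \<times> sphere 0 1)"
  proof
    fix y assume y: "y \<in> torus (Suc n)"
    have "y = (\<lambda>p. (fst p)(n := snd p)) (y(n:=1), y n)" by simp
    moreover have "(y(n:=1), y n) \<in> torus n \<times> sphere 0 1"
      using y by (auto simp: torus_def)
    ultimately show "y \<in> (\<lambda>p. (fst p)(n := snd p)) ` (torus n \<times> sphere 0 1)" by blast
  qed
next
  show "(\<lambda>p. (fst p)(n := snd p)) ` (torus n \<times> sphere 0 1) \<subseteq> torus (Suc n)"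
    by (auto simp: torus_def)
qed

lemma cont_upd: "continuous_on S (\<lambda>p::(nat \<Rightarrow> complex) \<times> complex. (fst p)(n := snd p))"
proof (rule continuous_on_coordinatewise_then_product)
  fix i
  show "continuous_on S (\<lambda>p::(nat \<Rightarrow> complex) \<times> complex. ((fst p)(n := snd p)) i)"
  proof (cases "i = n")
    case True then show ?thesis by (simp add: continuous_on_snd)
  next
    case False
    have "continuous_on S (\<lambda>p::(nat \<Rightarrow> complex) \<times> complex. fst p i)"
      by (intro continuous_on_compose2[OF continuous_on_product_coordinates continuous_on_fst]) auto
    then show ?thesis using False by simp
  qed
qed

lemma torus_compact_connected: "compact (torus n) \<and> connected (torus n)"
proof (induction n)
  case 0 then show ?case by (simp add: torus_0)
next
  case (Suc n)
  have c1: "compact (torus n)" "connected (torus n)" using Suc by auto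
  have c2: "compact (torus n \<times> sphere (0::complex) 1)"
    by (rule compact_Times[OF c1(1) compact_sphere])
  have c3: "connected (torus n \<times> sphere (0::complex) 1)"
    by (rule connected_Times[OF c1(2) connected_sphere]) simp
  show ?case unfolding torus_Suc
    using compact_continuous_image[OF cont_upd c2] connected_continuous_image[OF cont_upd c3] by blast
qed



lemma kron_inj:
  fixes \<theta> :: "nat \<Rightarrow> real"
  assumes key: "\<And>cv::nat\<Rightarrow>int. (\<Sum>i\<le>n. of_int (cv i) * \<theta> i) = 0 \<Longrightarrow> \<forall>i\<le>n. cv i = 0"
  shows "inj_on \<theta> {..n}"
proof (rule inj_onI, rule ccontr)
  fix i j assume ij: "i \<in> {..n}" "j \<in> {..n}" "\<theta> i = \<theta> j" "i \<noteq> j"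
  define cv where "cv = (\<lambda>k. if k = i then 1 else if k = j then -1 else 0::int)"
  have "(\<Sum>k\<le>n. of_int (cv k) * \<theta> k) = (\<Sum>k\<le>n. (if k = i then \<theta> i else 0) + (if k = j then - \<theta> j else 0))"
    by (rule sum.cong) (auto simp: cv_def ij)
  also have "\<dots> = 0" using ij by (simp add: sum.distrib)
  finally have "\<forall>k\<le>n. cv k = 0" by (rule key)
  then show False using ij by (auto simp: cv_def)
qed

lemma kron_indep:
  fixes \<theta> :: "nat \<Rightarrow> real"
  assumes key: "\<And>cv::nat\<Rightarrow>int. (\<Sum>i\<le>n. of_int (cv i) * \<theta> i) = 0 \<Longrightarrow> \<forall>i\<le>n. cv i = 0"
  shows "module.independent (\<lambda>r x. of_int r * x) (\<theta> ` {..n})"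
proof -
  interpret Modules.module "(\<lambda>r. (*) (real_of_int r))"
    by (simp add: Modules.module.intro distrib_left mult.commute)
  have inj: "inj_on \<theta> {..n}" by (rule kron_inj[OF key])
  show ?thesis unfolding independent_explicit_module
  proof (intro allI impI)
    fix t u v assume t: "finite t" "t \<subseteq> \<theta> ` {..n}" "(\<Sum>v\<in>t. of_int (u v) * v) = 0" "v \<in> t"
    define cv where "cv = (\<lambda>k. if \<theta> k \<in> t then u (\<theta> k) else 0)"
    define S where "S = {k. k \<le> n \<and> \<theta> k \<in> t}"
    have "(\<Sum>k\<le>n. of_int (cv k) * \<theta> k) = (\<Sum>k\<in>S. of_int (u (\<theta> k)) * \<theta> k)"
      unfolding cv_def S_def by (rule sum.mono_neutral_cong_right) auto
    also have "\<dots> = (\<Sum>x\<in>\<theta> ` S. of_int (u x) * x)"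
      by (rule sum.reindex[symmetric, unfolded comp_def]) (rule inj_on_subset[OF inj], auto simp: S_def)
    also have "\<theta> ` S = t" using t(2) by (auto simp: S_def)
    finally have "\<forall>k\<le>n. cv k = 0" using t(3) key by auto
    moreover obtain k where "k \<le> n" "v = \<theta> k" using t by auto
    ultimately show "u v = 0" using t(4) by (auto simp: cv_def)
  qed
qed

lemma kron_seq:
  fixes \<theta> \<alpha> :: "nat \<Rightarrow> real"
  assumes key: "\<And>cv::nat\<Rightarrow>int. (\<Sum>i\<le>n. of_int (cv i) * \<theta> i) = 0 \<Longrightarrow> \<forall>i\<le>n. cv i = 0"
    and one: "\<theta> n = 1"
  shows "\<exists>k::nat\<Rightarrow>int. \<forall>i<n. ((\<lambda>N. exp (2 * pi * \<i> * of_real (of_int (k N) * \<theta> i)))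
             \<longlongrightarrow> exp (2 * pi * \<i> * of_real (\<alpha> i))) sequentially"
proof -
  have indp: "module.independent (\<lambda>r x. of_int r * x) (\<theta> ` {..n})" by (rule kron_indep[OF key])
  have inj: "inj_on \<theta> {..n}" by (rule kron_inj[OF key])
  have "\<forall>N::nat. \<exists>k mm. \<forall>i<n. \<bar>of_int k * \<theta> i - of_int (mm i) - \<alpha> i\<bar> < 1 / real (Suc N)"
  proof
    fix N :: nat
    obtain k mm where "\<And>i. i < n \<Longrightarrow> \<bar>of_int k * \<theta> i - of_int (mm i) - \<alpha> i\<bar> < 1 / real (Suc N)"
      using Kronecker_thm_2[OF indp inj one, of "1 / real (Suc N)" \<alpha>] by auto
    then show "\<exists>k mm. \<forall>i<n. \<bar>of_int k * \<theta> i - of_int (mm i) - \<alpha> i\<bar> < 1 / real (Suc N)" by blast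
  qed
  then obtain k mm where km: "\<And>N i. i < n \<Longrightarrow> \<bar>of_int (k N) * \<theta> i - of_int (mm N i) - \<alpha> i\<bar> < 1 / real (Suc N)"
    by metis
  have "((\<lambda>N. exp (2 * pi * \<i> * of_real (of_int (k N) * \<theta> i))) \<longlongrightarrow> exp (2 * pi * \<i> * of_real (\<alpha> i))) sequentially"
    if i: "i < n" for i
  proof -
    define x where "x N = of_int (k N) * \<theta> i - of_int (mm N i) - \<alpha> i" for N
    have x0: "x \<longlonglongrightarrow> 0" by (rule LIMSEQ_norm_0) (use km[OF i] in \<open>simp add: x_def\<close>)
    have "((\<lambda>N. exp (2 * pi * \<i> * of_real (x N)) * exp (2 * pi * \<i> * of_real (\<alpha> i))) \<longlongrightarrow>
          exp (2 * pi * \<i> * of_real 0) * exp (2 * pi * \<i> * of_real (\<alpha> i))) sequentially"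
      by (intro tendsto_intros x0)
    moreover have "exp (2 * pi * \<i> * of_real (of_int (k N) * \<theta> i)) =
        exp (2 * pi * \<i> * of_real (x N)) * exp (2 * pi * \<i> * of_real (\<alpha> i))" for N
    proof -
      have "of_int (k N) * \<theta> i = x N + \<alpha> i + of_int (mm N i)" by (simp add: x_def)
      then have "exp (2 * pi * \<i> * of_real (of_int (k N) * \<theta> i)) =
          exp (2 * pi * \<i> * of_real (x N)) * exp (2 * pi * \<i> * of_real (\<alpha> i)) *
          exp ((2 * of_int (mm N i) * pi) * \<i>)"
        by (simp add: distrib_left exp_add algebra_simps)
      also have "exp ((2 * of_int (mm N i) * pi) * \<i>) = 1" by (rule exp_integer_2pi) simp
      finally show ?thesis by simp
    qed
    ultimately show ?thesis by simp
  qed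
  then show ?thesis by blast
qed



context SFL begin

definition "w i = e i ^ m"
definition "th i = (if i < \<delta> then Arg (w i) / (2*pi) else 1)"

lemma w_nz: "i < \<delta> \<Longrightarrow> w i \<noteq> 0" using e_nz by (simp add: w_def)
lemma w_norm: "i < \<delta> \<Longrightarrow> norm (w i) = 1" using e_norm by (simp add: w_def norm_power)

lemma unit_exp_Arg: "norm z = 1 \<Longrightarrow> exp (2 * pi * \<i> * of_real (Arg z / (2*pi))) = z"
proof -
  assume z: "norm z = 1"
  then have "z \<noteq> 0" by auto
  have "exp (2 * pi * \<i> * of_real (Arg z / (2*pi))) = exp (\<i> * of_real (Arg z))"
    by (simp add: field_simps)
  also have "\<dots> = cis (Arg z)" by (simp add: cis_conv_exp)
  also have "\<dots> = sgn z" using \<open>z \<noteq> 0\<close> by (simp add: cis_Arg)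
  also have "\<dots> = z" using z by (simp add: sgn_div_norm)
  finally show ?thesis .
qed

lemma w_exp: "i < \<delta> \<Longrightarrow> exp (2 * pi * \<i> * of_real (th i)) = w i"
  using unit_exp_Arg[OF w_norm] by (simp add: th_def)

lemma zeta_pow_m: "zeta powi (int m * k) = 1"
  using chi_one_iff[of "\<lambda>_. 0" "int m * k"] chi_zeta by simp

lemma th_key: "(\<Sum>i\<le>\<delta>. of_int (cv i) * th i) = 0 \<Longrightarrow> \<forall>i\<le>\<delta>. cv i = 0"
proof -
  assume S: "(\<Sum>i\<le>\<delta>. of_int (cv i) * th i) = 0"
  have s: "(\<Sum>i<\<delta>. of_int (cv i) * th i) = - of_int (cv \<delta>)"
    using S by (simp add: lessThan_Suc_atMost[symmetric] th_def)
  have "(\<Prod>i<\<delta>. w i powi cv i) = (\<Prod>i<\<delta>. exp (of_int (cv i) * (2 * pi * \<i> * of_real (th i))))"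
    by (rule prod.cong) (simp_all add: w_exp[symmetric] exp_power_int)
  also have "\<dots> = exp (\<Sum>i<\<delta>. of_int (cv i) * (2 * pi * \<i> * of_real (th i)))"
    by (simp add: exp_sum)
  also have "(\<Sum>i<\<delta>. of_int (cv i) * (2 * pi * \<i> * of_real (th i))) =
      (2 * of_int (- cv \<delta>) * pi) * \<i>"
  proof -
    have "(\<Sum>i<\<delta>. of_int (cv i) * (2 * pi * \<i> * of_real (th i))) =
        (2 * pi * \<i>) * of_real (\<Sum>i<\<delta>. of_int (cv i) * th i)"
      by (simp add: sum_distrib_left mult_ac)
    then show ?thesis using s by simp
  qed
  also have "exp ((2 * of_int (- cv \<delta>) * pi) * \<i>) = 1" by (rule exp_integer_2pi) simp
  finally have P1: "(\<Prod>i<\<delta>. w i powi cv i) = 1" .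
  define v where "v = (\<lambda>i. if i < \<delta> then int m * cv i else 0)"
  have vV: "v \<in> V" by (simp add: v_def V_def)
  have "chi v 0 = (\<Prod>i<\<delta>. e i powi v i)" by (rule chi_vec[OF vV])
  also have "\<dots> = (\<Prod>i<\<delta>. w i powi cv i)"
    by (rule prod.cong) (simp_all add: v_def w_def power_int_power)
  finally have "chi v 0 = 1" using P1 by simp
  then have v0: "v = (\<lambda>_. 0)" using chi_one_iff[OF vV] by simp
  have c0: "\<forall>i<\<delta>. cv i = 0"
  proof (intro allI impI)
    fix i assume i: "i < \<delta>"
    have "v i = 0" using v0 by simp
    then show "cv i = 0" using i m1 by (simp add: v_def)
  qed
  then have "(\<Sum>i<\<delta>. of_int (cv i) * th i) = 0" by simp
  then have "cv \<delta> = 0" using s by simp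
  then show ?thesis using c0 by (metis le_neq_implies_less)
qed

lemma th_one: "th \<delta> = 1" by (simp add: th_def)

lemma dense_seq:
  assumes t: "t \<in> torus \<delta>"
  shows "\<exists>k::nat\<Rightarrow>int. ((\<lambda>N. Epow (r + int m * k N)) \<longlongrightarrow> t) sequentially"
proof -
  define \<alpha> where "\<alpha> i = Arg (t i / e i powi r) / (2*pi)" for i
  obtain k where k: "\<And>i. i < \<delta> \<Longrightarrow> ((\<lambda>N. exp (2 * pi * \<i> * of_real (of_int (k N) * th i)))
             \<longlongrightarrow> exp (2 * pi * \<i> * of_real (\<alpha> i))) sequentially"
    using kron_seq[where n=\<delta> and \<theta>=th and \<alpha>=\<alpha>, OF th_key th_one] by blast
  have "((\<lambda>N. Epow (r + int m * k N) i) \<longlongrightarrow> t i) sequentially" for i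
  proof (cases "i < \<delta>")
    case True
    have tn: "norm (t i) = 1" using t True by (simp add: torus_def)
    have en: "norm (e i powi r) = 1" using e_norm[OF True] by (simp add: norm_power_int)
    have a: "exp (2 * pi * \<i> * of_real (\<alpha> i)) = t i / e i powi r"
      unfolding \<alpha>_def by (rule unit_exp_Arg) (simp add: norm_divide tn en)
    have eq: "Epow (r + int m * k N) i = e i powi r * exp (2 * pi * \<i> * of_real (of_int (k N) * th i))" for N
    proof -
      have "Epow (r + int m * k N) i = e i powi r * (e i powi (int m)) powi k N"
        using True e_nz[OF True] by (simp add: Epow_def power_int_add power_int_mult)
      also have "(e i powi (int m)) powi k N = w i powi k N" by (simp add: w_def)
      also have "\<dots> = exp (2 * pi * \<i> * of_real (of_int (k N) * th i))"
        using w_exp[OF True, symmetric] by (simp add: exp_power_int mult_ac)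
      finally show ?thesis .
    qed
    have "((\<lambda>N. e i powi r * exp (2 * pi * \<i> * of_real (of_int (k N) * th i))) \<longlongrightarrow>
        e i powi r * (t i / e i powi r)) sequentially"
      using tendsto_mult[OF tendsto_const[of "e i powi r"] k[OF True]] unfolding a .
    moreover have "e i powi r * (t i / e i powi r) = t i" using en by (auto simp: field_simps)
    ultimately show ?thesis by (simp add: eq)
  next
    case False
    then show ?thesis using t by (simp add: Epow_def torus_def)
  qed
  then show ?thesis by (auto intro!: tendsto_fun_comp)
qed

lemma roots_zeta: "roots_unity m = (\<lambda>i. zeta ^ i) ` {..<m}"
proof -
  have sub: "(\<lambda>i. zeta ^ i) ` {..<m} \<subseteq> roots_unity m"
  proof
    fix z assume "z \<in> (\<lambda>i. zeta ^ i) ` {..<m}"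
    then obtain i where "z = zeta ^ i" by auto
    moreover have "zeta ^ m = 1" using zeta_pow_m[of 1] by simp
    moreover have "(zeta ^ i) ^ m = (zeta ^ m) ^ i" by (metis power_mult mult.commute)
    ultimately show "z \<in> roots_unity m" by (simp add: roots_unity_def)
  qed
  have inj: "inj_on (\<lambda>i. zeta ^ i) {..<m}"
  proof (rule linorder_inj_onI')
    fix i j assume ij: "i \<in> {..<m}" "j \<in> {..<m}" "i < j"
    show "zeta ^ i \<noteq> zeta ^ j"
    proof
      assume "zeta ^ i = zeta ^ j"
      then have "zeta powi (int j - int i) = 1"
        using zeta_nz by (simp add: power_int_diff)
      then have "chi (\<lambda>_. 0) (int j - int i) = 1" using chi_zeta[of "int j - int i"] by simp
      then have "(int j - int i) mod int m = 0" using chi_one_iff[OF V_zero, of "int j - int i"] by simp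
      moreover have "(int j - int i) mod int m = int j - int i"
        using ij by (intro mod_pos_pos_trivial) auto
      ultimately show False using ij by simp
    qed
  qed
  have "card ((\<lambda>i. zeta ^ i) ` {..<m}) = m" using inj by (simp add: card_image)
  also have "m = card (roots_unity m)" using m1 card_roots_unity_eq[of m] by (simp add: roots_unity_def)
  finally show ?thesis using sub m1
    by (intro card_subset_eq[symmetric]) (auto simp: roots_unity_def intro!: finite_roots_unity)
qed

lemma K_sub: "torus \<delta> \<times> roots_unity m \<subseteq> closure (range (\<lambda>k. (Epow k, zeta powi k)))"
proof
  fix p assume p: "p \<in> torus \<delta> \<times> roots_unity m"
  then obtain t i where pt: "p = (t, zeta ^ i)" "t \<in> torus \<delta>" using roots_zeta by auto
  obtain k where k: "((\<lambda>N. Epow (int i + int m * k N)) \<longlongrightarrow> t) sequentially"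
    using dense_seq[OF pt(2)] by blast
  have z: "zeta powi (int i + int m * k N) = zeta ^ i" for N
    using zeta_nz zeta_pow_m by (simp add: power_int_add)
  define x where "x = (\<lambda>N. (Epow (int i + int m * k N), zeta powi (int i + int m * k N)))"
  have xl: "x \<longlonglongrightarrow> (t, zeta ^ i)" unfolding x_def z by (rule tendsto_Pair[OF k tendsto_const])
  have xr: "\<forall>N. x N \<in> range (\<lambda>k. (Epow k, zeta powi k))" unfolding x_def by blast
  show "p \<in> closure (range (\<lambda>k. (Epow k, zeta powi k)))"
    unfolding closure_sequential pt(1) using xl xr by blast
qed

lemma K1_sub: "torus \<delta> \<times> {1::complex} \<subseteq> closure (range (\<lambda>h. (Epow (int m * h), 1::complex)))"
proof
  fix p assume p: "p \<in> torus \<delta> \<times> {1::complex}"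
  then obtain t where pt: "p = (t, 1)" "t \<in> torus \<delta>" by auto
  obtain k where k: "((\<lambda>N. Epow (0 + int m * k N)) \<longlongrightarrow> t) sequentially"
    using dense_seq[OF pt(2)] by blast
  define x where "x = (\<lambda>N. (Epow (int m * k N), 1::complex))"
  have xl: "x \<longlonglongrightarrow> (t, 1)" unfolding x_def using tendsto_Pair[OF k tendsto_const[of 1]] by simp
  have xr: "\<forall>N. x N \<in> range (\<lambda>h. (Epow (int m * h), 1::complex))" unfolding x_def by blast
  show "p \<in> closure (range (\<lambda>h. (Epow (int m * h), 1::complex)))"
    unfolding closure_sequential pt(1) using xl xr by blast
qed

end


lemma cont_fst_coord: "continuous_on S (\<lambda>p::(nat \<Rightarrow> complex) \<times> complex. fst p l)"
  by (intro continuous_on_compose2[OF continuous_on_product_coordinates continuous_on_fst]) auto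

lemma cont_coord: "continuous_on S (\<lambda>x::nat \<Rightarrow> complex. x j)"
  by (rule continuous_on_subset[OF continuous_on_product_coordinates]) auto

context SFL begin

definition "K = torus \<delta> \<times> roots_unity m"
definition "K1 = torus \<delta> \<times> {1::complex}"
definition "NZ = {p::(nat \<Rightarrow> complex) \<times> complex. (\<forall>l<\<delta>. fst p l \<noteq> 0) \<and> snd p \<noteq> 0}"
definition "NZ2 = {x::nat \<Rightarrow> complex. \<forall>j<g. x j \<noteq> 0}"

lemma roots_nz: "z \<in> roots_unity m \<Longrightarrow> z \<noteq> 0"
proof
  assume "z \<in> roots_unity m" "z = 0"
  then have "(0::complex) ^ m = 1" by (simp add: roots_unity_def)
  then show False using m1 by (simp add: power_0_left)
qed

lemma torus_nz: "t \<in> torus n \<Longrightarrow> t l \<noteq> 0"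
proof (cases "l < n")
  case True
  assume "t \<in> torus n"
  then have "norm (t l) = 1" using True by (simp add: torus_def)
  then show ?thesis by auto
next
  case False
  assume "t \<in> torus n"
  then have "t l = 1" using False by (simp add: torus_def)
  then show ?thesis by simp
qed

lemma K_NZ: "K \<subseteq> NZ"
proof
  fix p assume "p \<in> K"
  then have "fst p \<in> torus \<delta>" "snd p \<in> roots_unity m" by (auto simp: K_def)
  then show "p \<in> NZ" unfolding NZ_def using torus_nz roots_nz by blast
qed

lemma K1_K: "K1 \<subseteq> K" by (auto simp: K1_def K_def roots_unity_def)

lemma K_compact: "compact K"
  unfolding K_def
proof (rule compact_Times[OF conjunct1[OF torus_compact_connected] finite_imp_compact])
  show "finite (roots_unity m)" unfolding roots_unity_def using m1 by (intro finite_roots_unity) simp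
qed

lemma K1_compact: "compact K1"
  unfolding K1_def using torus_compact_connected[of \<delta>]
  by (intro compact_Times) auto

lemma K1_connected: "connected K1"
  unfolding K1_def using torus_compact_connected[of \<delta>]
  by (intro connected_Times) auto

lemma Phi_cont: "continuous_on NZ Phi"
proof (rule continuous_on_coordinatewise_then_product)
  fix j
  show "continuous_on NZ (\<lambda>p. Phi p j)"
  proof (cases "j < g")
    case True
    have "continuous_on NZ (\<lambda>p. (\<Prod>l<\<delta>. fst p l powi a j l) * snd p powi b j)"
      by (intro continuous_intros cont_fst_coord) (auto simp: NZ_def)
    then show ?thesis using True by (simp add: Phi_def)
  qed (simp add: Phi_def)
qed

lemma Psi_cont: "continuous_on NZ2 Psi"
  unfolding Psi_def
proof (intro continuous_on_Pair continuous_on_coordinatewise_then_product)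
  fix i
  show "continuous_on NZ2 (\<lambda>x. if i < \<delta> then \<Prod>j<g. x j powi c i j else 1)"
    by (cases "i < \<delta>") (auto intro!: continuous_intros cont_coord simp: NZ2_def)
  show "continuous_on NZ2 (\<lambda>x. \<Prod>j<g. x j powi dd j)"
    by (auto intro!: continuous_intros cont_coord simp: NZ2_def)
qed

lemma Phi_NZ2: "p \<in> NZ \<Longrightarrow> Phi p \<in> NZ2"
  by (auto simp: Phi_def NZ2_def NZ_def)

lemma D_K: "range (\<lambda>k. (Epow k, zeta powi k)) \<subseteq> K"
proof -
  have "(Epow k, zeta powi k) \<in> K" for k
  proof -
    have 1: "Epow k \<in> torus \<delta>" using e_norm by (auto simp: Epow_def torus_def norm_power_int)
    have "(zeta powi k) ^ m = zeta powi (k * int m)" by (rule power_int_power')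
    also have "\<dots> = zeta powi (int m * k)" by (simp add: mult.commute)
    also have "\<dots> = 1" by (rule zeta_pow_m)
    finally have 2: "zeta powi k \<in> roots_unity m" by (simp add: roots_unity_def)
    show ?thesis using 1 2 by (simp add: K_def)
  qed
  then show ?thesis by blast
qed

lemma D1_K1: "range (\<lambda>h. (Epow (int m * h), 1::complex)) \<subseteq> K1"
  using e_norm by (auto simp: Epow_def torus_def norm_power_int K1_def)

lemma closure_D: "closure (range (\<lambda>k. (Epow k, zeta powi k))) = K"
  using K_sub D_K K_compact
  by (metis K_def closure_minimal compact_imp_closed subset_antisym)

lemma closure_D1: "closure (range (\<lambda>h. (Epow (int m * h), 1::complex))) = K1"
  using K1_sub D1_K1 K1_compact
  by (metis K1_def closure_minimal compact_imp_closed subset_antisym)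

lemma image_closure_eq:
  assumes "closure D = S" "compact S" "S \<subseteq> NZ"
  shows "closure (Phi ` D) = Phi ` S"
proof
  have "compact (Phi ` S)" using assms Phi_cont by (metis compact_continuous_image continuous_on_subset)
  moreover have "Phi ` D \<subseteq> Phi ` S" using assms closure_subset by blast
  ultimately show "closure (Phi ` D) \<subseteq> Phi ` S" by (simp add: closure_minimal compact_imp_closed)
  show "Phi ` S \<subseteq> closure (Phi ` D)"
    using image_closure_subset[of D Phi "closure (Phi ` D)"] assms Phi_cont
    by (metis closed_closure closure_subset continuous_on_subset)
qed

lemma SF_eq: "SF g u = Phi ` K"
proof -
  have "(\<lambda>k::int. (\<lambda>j. if j < g then u j powi k else 1)) = (\<lambda>k. Phi (Epow k, zeta powi k))"
    by (rule ext) (simp only: U_Phi[symmetric] U_def)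
  then have eqR: "range (\<lambda>k::int. (\<lambda>j. if j < g then u j powi k else 1)) = Phi ` range (\<lambda>k. (Epow k, zeta powi k))"
    by (simp only: image_image)
  show ?thesis unfolding SF_def eqR by (rule image_closure_eq[OF closure_D K_compact K_NZ])
qed

lemma SFm_eq: "SF g (\<lambda>j. u j ^ m) = Phi ` K1"
proof -
  have "U (int m * h) = Phi (Epow (int m * h), 1)" for h
    using U_Phi[of "int m * h"] zeta_pow_m[of h] by simp
  moreover have "(\<lambda>j. if j < g then (u j ^ m) powi h else 1) = U (int m * h)" for h
    by (simp only: U_def power_int_power)
  ultimately have "(\<lambda>h::int. (\<lambda>j. if j < g then (u j ^ m) powi h else 1)) = (\<lambda>h. Phi (Epow (int m * h), 1))"
    by simp
  then have eqR: "range (\<lambda>k::int. (\<lambda>j. if j < g then (u j ^ m) powi k else 1)) = Phi ` range (\<lambda>h. (Epow (int m * h), 1::complex))"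
    by (simp only: image_image)
  have sub: "K1 \<subseteq> NZ" using K1_K K_NZ by (rule order_trans)
  have "SF g (\<lambda>j. u j ^ m) = closure (range (\<lambda>k::int. (\<lambda>j. if j < g then (u j ^ m) powi k else 1)))"
    by (simp add: SF_def)
  also have "\<dots> = closure (Phi ` range (\<lambda>h. (Epow (int m * h), 1::complex)))" by (simp only: eqR)
  also have "\<dots> = Phi ` K1" by (rule image_closure_eq[OF closure_D1 K1_compact sub])
  finally show ?thesis .
qed

lemma Psi_Phi: "p \<in> K \<Longrightarrow> Psi (Phi p) = p"
proof -
  assume p: "p \<in> K"
  then have "p \<in> closure (range (\<lambda>k. (Epow k, zeta powi k)))" by (simp only: closure_D)
  then obtain x where x0: "\<forall>n. x n \<in> range (\<lambda>k. (Epow k, zeta powi k))" and x2: "x \<longlonglongrightarrow> p"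
    unfolding closure_sequential by blast
  have x: "\<And>n. x n \<in> range (\<lambda>k. (Epow k, zeta powi k))" "x \<longlonglongrightarrow> p" using x0 x2 by auto
  have im: "Phi ` K \<subseteq> NZ2" using K_NZ Phi_NZ2 by blast
  have cont: "continuous_on K (\<lambda>p. Psi (Phi p))"
    by (rule continuous_on_compose2[OF Psi_cont continuous_on_subset[OF Phi_cont K_NZ] im])
  have xK: "x n \<in> K" for n using x(1) D_K by blast
  have "(\<lambda>n. Psi (Phi (x n))) \<longlonglongrightarrow> Psi (Phi p)"
    by (rule continuous_on_tendsto_compose[OF cont x(2) p]) (simp add: xK)
  moreover have "Psi (Phi (x n)) = x n" for n
  proof -
    obtain k where "x n = (Epow k, zeta powi k)" using x(1)[of n] by blast
    then show ?thesis using U_Phi[of k] Psi_U[of k] by simp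
  qed
  ultimately have "x \<longlonglongrightarrow> Psi (Phi p)" by simp
  then show ?thesis using x(2) by (rule LIMSEQ_unique)
qed

end


context SFL begin

lemma SF_NZ2: "SF g u \<subseteq> NZ2" unfolding SF_eq using K_NZ Phi_NZ2 by blast

lemma Psi_SF: "x \<in> SF g u \<Longrightarrow> Psi x \<in> K \<and> Phi (Psi x) = x"
proof -
  assume "x \<in> SF g u"
  then obtain p where p: "p \<in> K" "x = Phi p" unfolding SF_eq by blast
  then show ?thesis using Psi_Phi[OF p(1)] by simp
qed

lemma homeo: "homeomorphic_map (top_of_set (SF g u)) (top_of_set (torus \<delta> \<times> roots_unity m)) Psi"
proof -
  have c1: "continuous_map (top_of_set (SF g u)) (top_of_set K) Psi"
    unfolding continuous_map_subtopology_eu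
  proof
    show "continuous_on (SF g u) Psi" by (rule continuous_on_subset[OF Psi_cont SF_NZ2])
    show "Psi \<in> SF g u \<rightarrow> K" using Psi_SF by blast
  qed
  have c2: "continuous_map (top_of_set K) (top_of_set (SF g u)) Phi"
    unfolding continuous_map_subtopology_eu
  proof
    show "continuous_on K Phi" by (rule continuous_on_subset[OF Phi_cont K_NZ])
    show "Phi \<in> K \<rightarrow> SF g u" unfolding SF_eq by blast
  qed
  have "homeomorphic_maps (top_of_set (SF g u)) (top_of_set K) Psi Phi"
    unfolding homeomorphic_maps_def using c1 c2 Psi_SF Psi_Phi by simp
  then show ?thesis unfolding homeomorphic_map_maps K_def by blast
qed

lemma tone_K1: "(tone, 1) \<in> K1" by (simp add: K1_def torus_def tone_def)

lemma Phi_tone: "Phi (tone, 1) = tone" by (auto simp: Phi_def tone_def)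

lemma Psi_tone: "Psi tone = (tone, 1)" by (auto simp: Psi_def tone_def)

lemma tone_SF: "tone \<in> Phi ` K1"
proof -
  have "Phi (tone, 1) \<in> Phi ` K1" using tone_K1 by (rule imageI)
  then show ?thesis by (simp only: Phi_tone)
qed

lemma K1_SF: "Phi ` K1 \<subseteq> SF g u" unfolding SF_eq using K1_K by (rule image_mono)

lemma comp_eq: "connected_component_set (SF g u) tone = Phi ` K1"
proof
  show "Phi ` K1 \<subseteq> connected_component_set (SF g u) tone"
  proof (rule connected_component_maximal)
    show "tone \<in> Phi ` K1" by (rule tone_SF)
    have "K1 \<subseteq> NZ" using K1_K K_NZ by (rule order_trans)
    then show "connected (Phi ` K1)"
      by (rule connected_continuous_image[OF continuous_on_subset[OF Phi_cont] K1_connected])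
    show "Phi ` K1 \<subseteq> SF g u" by (rule K1_SF)
  qed
  show "connected_component_set (SF g u) tone \<subseteq> Phi ` K1"
  proof
    fix y assume y: "y \<in> connected_component_set (SF g u) tone"
    define C where "C = connected_component_set (SF g u) tone"
    have CS: "C \<subseteq> SF g u" by (simp add: C_def connected_component_subset)
    have CN: "C \<subseteq> NZ2" using CS SF_NZ2 by (rule order_trans)
    have conn: "connected ((\<lambda>x. snd (Psi x)) ` C)"
    proof (rule connected_continuous_image)
      show "connected C" by (simp add: C_def)
      show "continuous_on C (\<lambda>x. snd (Psi x))"
        by (rule continuous_on_snd[OF continuous_on_subset[OF Psi_cont CN]])
    qed
    have sub: "(\<lambda>x. snd (Psi x)) ` C \<subseteq> roots_unity m"
    proof
      fix z assume "z \<in> (\<lambda>x. snd (Psi x)) ` C"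
      then obtain x where "x \<in> C" "z = snd (Psi x)" by blast
      then have "Psi x \<in> K" using Psi_SF CS by blast
      then show "z \<in> roots_unity m" using \<open>z = snd (Psi x)\<close> by (auto simp: K_def)
    qed
    have "finite (roots_unity m)" unfolding roots_unity_def using m1 by (intro finite_roots_unity) simp
    then have fin: "finite ((\<lambda>x. snd (Psi x)) ` C)" using sub by (rule finite_subset[rotated])
    have "tone \<in> SF g u" using tone_SF K1_SF by blast
    then have "tone \<in> C" unfolding C_def by (simp add: connected_component_refl_eq)
    then have "snd (Psi tone) \<in> (\<lambda>x. snd (Psi x)) ` C" by (rule imageI)
    then have one: "1 \<in> (\<lambda>x. snd (Psi x)) ` C" by (simp only: Psi_tone snd_conv)
    have "(\<lambda>x. snd (Psi x)) ` C = {} \<or> (\<exists>a. (\<lambda>x. snd (Psi x)) ` C = {a})"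
      using connected_finite_iff_sing[OF conn] fin by blast
    then have single: "(\<lambda>x. snd (Psi x)) ` C = {1}" using one by (metis empty_iff singletonD)
    have yC: "y \<in> C" using y by (simp add: C_def)
    then have "snd (Psi y) \<in> {1}" using single by blast
    moreover have "Psi y \<in> K" "Phi (Psi y) = y" using Psi_SF CS yC by blast+
    ultimately have "Psi y \<in> K1" by (auto simp: K_def K1_def mem_Times_iff)
    then have "Phi (Psi y) \<in> Phi ` K1" by (rule imageI)
    then show "y \<in> Phi ` K1" using \<open>Phi (Psi y) = y\<close> by simp
  qed
qed

lemma pmul_K: "p \<in> K \<Longrightarrow> q \<in> K \<Longrightarrow> pmul p q \<in> K"
  by (auto simp: K_def pmul_def tmul_def torus_def roots_unity_def norm_mult power_mult_distrib)

lemma group_SF: "group (SF_group g u)"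
proof (rule groupI)
  fix x y assume "x \<in> carrier (SF_group g u)" "y \<in> carrier (SF_group g u)"
  then obtain p q where pq: "p \<in> K" "q \<in> K" "x = Phi p" "y = Phi q"
    unfolding SF_group_def SF_eq by auto
  have "tmul x y = Phi (pmul p q)" using pq by (simp add: Phi_hom)
  moreover have "pmul p q \<in> K" using pq by (simp add: pmul_K)
  ultimately show "x \<otimes>\<^bsub>SF_group g u\<^esub> y \<in> carrier (SF_group g u)"
    unfolding SF_group_def SF_eq by simp
next
  show "\<one>\<^bsub>SF_group g u\<^esub> \<in> carrier (SF_group g u)"
    using tone_SF K1_SF unfolding SF_group_def by auto
next
  fix x y z
  show "x \<otimes>\<^bsub>SF_group g u\<^esub> y \<otimes>\<^bsub>SF_group g u\<^esub> z = x \<otimes>\<^bsub>SF_group g u\<^esub> (y \<otimes>\<^bsub>SF_group g u\<^esub> z)"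
    by (simp add: SF_group_def tmul_def mult.assoc)
next
  fix x show "\<one>\<^bsub>SF_group g u\<^esub> \<otimes>\<^bsub>SF_group g u\<^esub> x = x"
    by (simp add: SF_group_def tmul_def tone_def)
next
  fix x assume "x \<in> carrier (SF_group g u)"
  then obtain p where p: "p \<in> K" "x = Phi p" unfolding SF_group_def SF_eq by auto
  define q where "q = ((\<lambda>i. inverse (fst p i)), inverse (snd p))"
  have pt: "fst p \<in> torus \<delta>" "snd p \<in> roots_unity m" using p by (auto simp: K_def)
  have q: "q \<in> K" using pt
    by (auto simp: q_def K_def torus_def roots_unity_def norm_inverse power_inverse)
  have nz: "fst p i \<noteq> 0" "snd p \<noteq> 0" for i using pt torus_nz roots_nz by auto
  have "pmul q p = (tone, 1)" using nz by (auto simp: pmul_def q_def tmul_def tone_def)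
  then have "tmul (Phi q) (Phi p) = tone" by (simp add: Phi_hom[symmetric] Phi_tone)
  moreover have "Phi q \<in> SF g u" unfolding SF_eq using q by (rule imageI)
  ultimately show "\<exists>y\<in>carrier (SF_group g u). y \<otimes>\<^bsub>SF_group g u\<^esub> x = \<one>\<^bsub>SF_group g u\<^esub>"
    using p by (auto simp: SF_group_def)
qed

lemma group_cyc: "group (cyclic_group m)"
proof (rule groupI)
  fix x assume x: "x \<in> carrier (cyclic_group m)"
  then have xm: "x ^ m = 1" by (simp add: cyclic_group_def roots_unity_def)
  have "x ^ (m - 1) * x = x ^ m" using m1 by (metis Suc_diff_le diff_Suc_1 power_Suc2)
  then have 1: "x ^ (m - 1) * x = 1" using xm by simp
  have "(x ^ (m - 1)) ^ m = (x ^ m) ^ (m - 1)" by (metis power_mult mult.commute)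
  then have 2: "x ^ (m - 1) \<in> carrier (cyclic_group m)" using xm
    by (simp add: cyclic_group_def roots_unity_def)
  show "\<exists>y\<in>carrier (cyclic_group m). y \<otimes>\<^bsub>cyclic_group m\<^esub> x = \<one>\<^bsub>cyclic_group m\<^esub>"
    using 1 2 by (auto simp: cyclic_group_def)
qed (auto simp: cyclic_group_def roots_unity_def power_mult_distrib mult.assoc)

lemma ghom: "group_hom (SF_group g u) (cyclic_group m) (\<lambda>x. snd (Psi x))"
proof (rule group_hom.intro[OF group_SF group_cyc])
  have 1: "(\<lambda>x. snd (Psi x)) \<in> carrier (SF_group g u) \<rightarrow> carrier (cyclic_group m)"
  proof
    fix x assume "x \<in> carrier (SF_group g u)"
    then have "Psi x \<in> K" using Psi_SF by (simp add: SF_group_def)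
    then show "snd (Psi x) \<in> carrier (cyclic_group m)" by (auto simp: K_def cyclic_group_def)
  qed
  have 2: "snd (Psi (x \<otimes>\<^bsub>SF_group g u\<^esub> y)) = snd (Psi x) \<otimes>\<^bsub>cyclic_group m\<^esub> snd (Psi y)" for x y
    by (simp add: SF_group_def cyclic_group_def Psi_hom pmul_def)
  show "group_hom_axioms (SF_group g u) (cyclic_group m) (\<lambda>x. snd (Psi x))"
    unfolding group_hom_axioms_def hom_def using 1 2 by blast
qed

lemma kernel_eq: "kernel (SF_group g u) (cyclic_group m) (\<lambda>x. snd (Psi x)) = connected_component_set (SF g u) tone"
proof -
  have "{x \<in> SF g u. snd (Psi x) = 1} = Phi ` K1"
  proof
    show "{x \<in> SF g u. snd (Psi x) = 1} \<subseteq> Phi ` K1"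
    proof
      fix x assume x: "x \<in> {x \<in> SF g u. snd (Psi x) = 1}"
      then have "Psi x \<in> K" "Phi (Psi x) = x" "snd (Psi x) = 1" using Psi_SF by auto
      then have "Psi x \<in> K1" by (auto simp: K_def K1_def mem_Times_iff)
      then have "Phi (Psi x) \<in> Phi ` K1" by (rule imageI)
      then show "x \<in> Phi ` K1" using \<open>Phi (Psi x) = x\<close> by simp
    qed
    show "Phi ` K1 \<subseteq> {x \<in> SF g u. snd (Psi x) = 1}"
    proof
      fix x assume "x \<in> Phi ` K1"
      then obtain p where p: "p \<in> K1" "x = Phi p" by blast
      then have "p \<in> K" using K1_K by blast
      then have "Psi x = p" using p Psi_Phi by simp
      moreover have "snd p = 1" using p by (auto simp: K1_def)
      moreover have "x \<in> SF g u" using p K1_SF by blast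
      ultimately show "x \<in> {x \<in> SF g u. snd (Psi x) = 1}" by simp
    qed
  qed
  then show ?thesis using comp_eq by (simp add: kernel_def SF_group_def cyclic_group_def)
qed

lemma surj: "(\<lambda>x. snd (Psi x)) ` carrier (SF_group g u) = carrier (cyclic_group m)"
proof
  show "(\<lambda>x. snd (Psi x)) ` carrier (SF_group g u) \<subseteq> carrier (cyclic_group m)"
  proof
    fix z assume "z \<in> (\<lambda>x. snd (Psi x)) ` carrier (SF_group g u)"
    then obtain x where "x \<in> SF g u" "z = snd (Psi x)" by (auto simp: SF_group_def)
    then have "Psi x \<in> K" using Psi_SF by blast
    then show "z \<in> carrier (cyclic_group m)" using \<open>z = snd (Psi x)\<close> by (auto simp: K_def cyclic_group_def)
  qed
  show "carrier (cyclic_group m) \<subseteq> (\<lambda>x. snd (Psi x)) ` carrier (SF_group g u)"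
  proof
    fix z assume z: "z \<in> carrier (cyclic_group m)"
    then have p: "(tone, z) \<in> K" by (simp add: K_def cyclic_group_def torus_def tone_def)
    then have "Phi (tone, z) \<in> SF g u" unfolding SF_eq by (rule imageI)
    moreover have "snd (Psi (Phi (tone, z))) = z" using Psi_Phi[OF p] by simp
    ultimately show "z \<in> (\<lambda>x. snd (Psi x)) ` carrier (SF_group g u)"
      unfolding SF_group_def by force
  qed
qed

lemma main: "(\<exists>\<phi>. homeomorphic_map (top_of_set (SF g u)) (top_of_set (torus \<delta> \<times> roots_unity m)) \<phi>
              \<and> (\<forall>x\<in>SF g u. \<forall>y\<in>SF g u. \<phi> (tmul x y) = (tmul (fst (\<phi> x)) (fst (\<phi> y)), snd (\<phi> x) * snd (\<phi> y))))
       \<and> connected_component_set (SF g u) tone = SF g (\<lambda>j. u j ^ m)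
       \<and> SF_group g u Mod connected_component_set (SF g u) tone \<cong> cyclic_group m"
proof (intro conjI)
  have "\<forall>x\<in>SF g u. \<forall>y\<in>SF g u. Psi (tmul x y) = (tmul (fst (Psi x)) (fst (Psi y)), snd (Psi x) * snd (Psi y))"
    by (simp add: Psi_hom pmul_def)
  then show "\<exists>\<phi>. homeomorphic_map (top_of_set (SF g u)) (top_of_set (torus \<delta> \<times> roots_unity m)) \<phi>
              \<and> (\<forall>x\<in>SF g u. \<forall>y\<in>SF g u. \<phi> (tmul x y) = (tmul (fst (\<phi> x)) (fst (\<phi> y)), snd (\<phi> x) * snd (\<phi> y)))"
    using homeo by blast
  show "connected_component_set (SF g u) tone = SF g (\<lambda>j. u j ^ m)"
    by (simp only: comp_eq SFm_eq)
  have "SF_group g u Mod kernel (SF_group g u) (cyclic_group m) (\<lambda>x. snd (Psi x)) \<cong> cyclic_group m"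
    by (rule group_hom.FactGroup_iso[OF ghom surj])
  then show "SF_group g u Mod connected_component_set (SF g u) tone \<cong> cyclic_group m"
    by (simp only: kernel_eq)
qed

end

theorem theoremE:
  fixes p d q g :: nat and P :: "int poly" and \<alpha> u :: "nat \<Rightarrow> complex"
    and \<delta> m :: nat and \<psi> :: "(nat \<Rightarrow> int) \<times> int \<Rightarrow> complex"
  assumes "prime p" and "d \<ge> 1" and "q = p ^ d"
    and charpoly: "map_poly of_int P = (\<Prod>j<g. [:- \<alpha> j, 1:] * [:- cnj (\<alpha> j), 1:])"
    and weil: "\<forall>j<g. norm (\<alpha> j) = sqrt (real q)"
    and upper: "\<forall>j<g. Im (\<alpha> j) \<ge> 0"
    and ordered: "\<forall>i<g. \<forall>j<i. Arg (\<alpha> i) \<ge> Arg (\<alpha> j)"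
    and u_def: "\<forall>j. u j = \<alpha> j / complex_of_real (sqrt (real q))"
    and "m \<ge> 1"
    and psi_bij: "bij_betw \<psi> ({v. \<forall>j\<ge>\<delta>. v j = 0} \<times> {0..<int m}) (angle_group g u)"
    and psi_hom: "\<forall>a\<in>{v. \<forall>j\<ge>\<delta>. v j = 0} \<times> {0..<int m}. \<forall>b\<in>{v. \<forall>j\<ge>\<delta>. v j = 0} \<times> {0..<int m}.
        \<psi> (\<lambda>j. fst a j + fst b j, (snd a + snd b) mod int m) = \<psi> a * \<psi> b"
  shows "(\<exists>\<phi>. homeomorphic_map (top_of_set (SF g u)) (top_of_set (torus \<delta> \<times> roots_unity m)) \<phi>
              \<and> (\<forall>x\<in>SF g u. \<forall>y\<in>SF g u. \<phi> (tmul x y) = (tmul (fst (\<phi> x)) (fst (\<phi> y)), snd (\<phi> x) * snd (\<phi> y))))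
       \<and> connected_component_set (SF g u) tone = SF g (\<lambda>j. u j ^ m)
       \<and> SF_group g u Mod connected_component_set (SF g u) tone \<cong> cyclic_group m"
proof -
  have q2: "real q > 0" using assms(1,2,3) by (simp add: prime_gt_0_nat)
  interpret SFL g \<delta> m u \<psi>
  proof
    show "\<forall>j<g. norm (u j) = 1" using weil u_def q2 by (simp add: norm_divide)
  qed (use assms in auto)
  show ?thesis by (rule main)
qed

end
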